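(* Let $\{\varphi_n\}_{n\ge1}$ be an orthonormal system on $[0,1]$ such that, uniformly in $x\in[0,1]$, $\int_0^x\varphi_n(u)\,du=O\!\left(\frac1n\right)$ as $n\to\infty$. Let $\{d_n\}$ be a sequence of real numbers with $d_n=O\!\left(\frac{\sqrt{n}}{\log^2(n+1)}\right)$. Then for every $a=\{a_n\}\in\ell_2$, $$B_n(d,a)\le \max_{x\in[0,1]}\left|\int_0^x\sum_{k=1}^n d_k a_k\log k\,\varphi_k(u)\,du\right|=O(1)\quad (n\to\infty),$$ where $B_n(d,a)=\max_{1\le i<n}\left|\int_0^{i/n}\sum_{k=1}^n d_k a_k\log k\,\varphi_k(x)\,dx\right|$.
   Context: An orthonormal system on $[0,1]$ is a sequence of functions orthonormal in $L_2(0,1)$. $\log$ denotes the logarithm (so $\log 1=0$). *)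

theory Defs
  imports "HOL-Analysis.Analysis" "HOL-Library.Landau_Symbols"
begin

definition orthonormal_system :: "(nat \<Rightarrow> real \<Rightarrow> real) \<Rightarrow> bool" where
  "orthonormal_system phi \<longleftrightarrow>
     (\<forall>n\<ge>1. phi n \<in> borel_measurable lborel \<and>
             set_integrable lborel {0..1} (\<lambda>x. (phi n x)\<^sup>2)) \<and>
     (\<forall>n\<ge>1. \<forall>m\<ge>1. (LINT x:{0..1}|lborel. phi n x * phi m x) = (if n = m then 1 else 0))"

definition Fint :: "(nat \<Rightarrow> real \<Rightarrow> real) \<Rightarrow> (nat \<Rightarrow> real) \<Rightarrow> (nat \<Rightarrow> real) \<Rightarrow> nat \<Rightarrow> real \<Rightarrow> real" where
  "Fint phi d a n x = (LINT u:{0..x}|lborel. (\<Sum>k=1..n. d k * a k * ln (real k) * phi k u))"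

definition Bn :: "(nat \<Rightarrow> real \<Rightarrow> real) \<Rightarrow> (nat \<Rightarrow> real) \<Rightarrow> (nat \<Rightarrow> real) \<Rightarrow> nat \<Rightarrow> real" where
  "Bn phi d a n = Max {\<bar>Fint phi d a n (real i / real n)\<bar> | i. 1 \<le> i \<and> i < n}"

end

theory Submission
  imports Defs
begin
lemma L1:
  assumes "orthonormal_system phi" "k \<ge> 1"
  shows "set_integrable lborel {0..1::real} (phi k)"
proof -
  have m: "phi k \<in> borel_measurable lborel" and s: "set_integrable lborel {0..1} (\<lambda>x. (phi k x)\<^sup>2)"
    using assms unfolding orthonormal_system_def by auto
  have c: "set_integrable lborel {0..1::real} (\<lambda>x. 1::real)"
    by (rule borel_integrable_atLeastAtMost') (rule continuous_on_const)
  have "set_integrable lborel {0..1} (\<lambda>x. 1 + (phi k x)\<^sup>2)"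
    using c s by (rule set_integral_add(1))
  moreover have "set_borel_measurable lborel {0..1} (phi k)"
    using m unfolding set_borel_measurable_def by measurable
  moreover have "AE x in lborel. x \<in> {0..1} \<longrightarrow> norm (phi k x) \<le> norm (1 + (phi k x)\<^sup>2)"
  proof (intro AE_I2 impI)
    fix x
    have "\<bar>phi k x\<bar> \<le> 1 + (phi k x)\<^sup>2"
    proof -
      have "0 \<le> (\<bar>phi k x\<bar> - 1/2)\<^sup>2" by simp
      hence "\<bar>phi k x\<bar> \<le> \<bar>phi k x\<bar> * \<bar>phi k x\<bar> + 1/4" by (simp add: power2_eq_square algebra_simps)
      thus ?thesis by (simp add: power2_eq_square abs_mult_self)
    qed
    then show "norm (phi k x) \<le> norm (1 + (phi k x)\<^sup>2)" by simp
  qed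
  ultimately show ?thesis by (rule set_integrable_bound)
qed

lemma L1x:
  assumes "orthonormal_system phi" "k \<ge> 1" "x \<in> {0..1::real}"
  shows "set_integrable lborel {0..x} (phi k)"
  using L1[OF assms(1,2)] by (rule set_integrable_subset) (use assms(3) in auto)

lemma L2:
  assumes "orthonormal_system phi" "k \<ge> 1" "x \<in> {0..1::real}"
  shows "\<bar>LINT u:{0..x}|lborel. phi k u\<bar> \<le> (LINT u:{0..1}|lborel. \<bar>phi k u\<bar>)"
proof -
  have i1: "set_integrable lborel {0..1} (\<lambda>u. \<bar>phi k u\<bar>)"
    using L1[OF assms(1,2)] by (rule set_integrable_abs)
  have ix: "set_integrable lborel {0..x} (\<lambda>u. \<bar>phi k u\<bar>)"
    using L1x[OF assms] by (rule set_integrable_abs)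
  have "\<bar>LINT u:{0..x}|lborel. phi k u\<bar> \<le> (LINT u:{0..x}|lborel. norm (phi k u))"
    using set_integral_norm_bound[OF L1x[OF assms]] by simp
  also have "\<dots> \<le> (LINT u:{0..1}|lborel. \<bar>phi k u\<bar>)"
    unfolding set_lebesgue_integral_def
  proof (rule integral_mono)
    show "integrable lborel (\<lambda>u. indicat_real {0..x} u *\<^sub>R norm (phi k u))"
      using ix by (simp add: set_integrable_def)
    show "integrable lborel (\<lambda>u. indicat_real {0..1} u *\<^sub>R \<bar>phi k u\<bar>)"
      using i1 by (simp add: set_integrable_def)
    fix u show "indicat_real {0..x} u *\<^sub>R norm (phi k u) \<le> indicat_real {0..1} u *\<^sub>R \<bar>phi k u\<bar>"
      using assms(3) by (auto simp: indicator_def)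
  qed
  finally show ?thesis .
qed

lemma L2nn: "(0::real) \<le> (LINT u:{0..1::real}|lborel. \<bar>phi k u\<bar>)"
  by (simp add: set_lebesgue_integral_def)

lemma L3: "summable (\<lambda>n. 1 / (real n * (ln (real n + 1))\<^sup>2))"
proof -
  let ?f = "\<lambda>n. 1 / (real n * (ln (real n + 1))\<^sup>2)"
  have "summable (\<lambda>n. 2^n * ?f (2^n))"
  proof (rule summable_comparison_test_ev)
    show "summable (\<lambda>n. (1 / (ln 2)\<^sup>2) * inverse (real n ^ 2))"
      by (intro summable_mult inverse_power_summable) auto
    show "\<forall>\<^sub>F n in sequentially. norm (2^n * ?f (2^n)) \<le> (1 / (ln 2)\<^sup>2) * inverse (real n ^ 2)"
      unfolding eventually_sequentially
    proof (intro exI[of _ 1] allI impI)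
      fix n :: nat assume n: "n \<ge> 1"
      have l: "ln (2::real) * n \<le> ln (2 ^ n + 1)"
      proof -
        have "ln (2^n::real) \<le> ln (2^n+1)" by (intro ln_mono) auto
        moreover have "ln (2^n::real) = n * ln 2" by (simp add: ln_realpow)
        ultimately show ?thesis by (simp add: mult.commute)
      qed
      have p: "0 < ln (2::real) * n" using n by simp
      have "norm (2^n * ?f (2^n)) = 1 / (ln (2 ^ n + 1))\<^sup>2" by simp
      also have "\<dots> \<le> 1 / (ln 2 * n)\<^sup>2"
        proof -
        have q: "0 < ln (2 ^ n + 1::real)" using l p by linarith
        have w: "0 < (ln 2 * real n)\<^sup>2" using p by (simp add: power2_eq_square)
        have "(ln 2 * real n)\<^sup>2 \<le> (ln (2 ^ n + 1))\<^sup>2" using l p by (intro power_mono) auto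
        thus ?thesis using w by (intro frac_le) auto
      qed
      also have "\<dots> = (1 / (ln 2)\<^sup>2) * inverse (real n ^ 2)"
        by (simp add: field_simps power_mult_distrib)
      finally show "norm (2^n * ?f (2^n)) \<le> (1 / (ln 2)\<^sup>2) * inverse (real n ^ 2)" .
    qed
  qed
  moreover have "?f (Suc m) \<le> ?f m" if "0 < m" for m
  proof -
    have a: "0 < ln (real m + 1)" using that by simp
    have "ln (real m + 1) \<le> ln (real (Suc m) + 1)" using that by simp
    hence "(ln (real m + 1))\<^sup>2 \<le> (ln (real (Suc m) + 1))\<^sup>2" using a by (intro power_mono) auto
    hence "real m * (ln (real m + 1))\<^sup>2 \<le> real (Suc m) * (ln (real (Suc m) + 1))\<^sup>2"
      by (intro mult_mono) auto
    thus ?thesis using a that by (intro divide_left_mono) auto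
  qed
  moreover have "\<And>n. ?f n \<ge> 0" by simp
  ultimately show ?thesis using condensation_test[of ?f] by blast
qed

lemma sum_integral:
  fixes f :: "nat \<Rightarrow> real \<Rightarrow> real"
  assumes "\<And>k. k \<in> I \<Longrightarrow> set_integrable lborel A (f k)"
  shows "(LINT u:A|lborel. (\<Sum>k\<in>I. f k u)) = (\<Sum>k\<in>I. LINT u:A|lborel. f k u)"
proof -
  have "(\<lambda>x. indicator A x * (\<Sum>k\<in>I. f k x)) = (\<lambda>x. \<Sum>k\<in>I. indicator A x * f k x)"
    by (simp add: sum_distrib_left)
  moreover have "\<And>k. k \<in> I \<Longrightarrow> integrable lborel (\<lambda>x. indicator A x * f k x)"
    using assms unfolding set_integrable_def by simp
  ultimately show ?thesis unfolding set_lebesgue_integral_def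
    by (simp only: real_scaleR_def) (rule Bochner_Integration.integral_sum)
qed

theorem theorem5:
  fixes phi :: "nat \<Rightarrow> real \<Rightarrow> real" and d a :: "nat \<Rightarrow> real"
  assumes "orthonormal_system phi"
    and "\<exists>C. \<forall>\<^sub>F n in sequentially. \<forall>x\<in>{0..1}.
            \<bar>LINT u:{0..x}|lborel. phi n u\<bar> \<le> C / real n"
    and "d \<in> O(\<lambda>n. sqrt (real n) / (ln (real n + 1))\<^sup>2)"
    and "summable (\<lambda>n. (a n)\<^sup>2)"
  shows "(\<forall>n\<ge>2. Bn phi d a n \<le> (SUP x\<in>{0..1}. \<bar>Fint phi d a n x\<bar>))
         \<and> (\<lambda>n. SUP x\<in>{0..1}. \<bar>Fint phi d a n x\<bar>) \<in> O(\<lambda>_. 1)"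
proof -
  obtain C0 where "\<forall>\<^sub>F n in sequentially. \<forall>x\<in>{0..1}.
            \<bar>LINT u:{0..x}|lborel. phi n u\<bar> \<le> C0 / real n" using assms(2) by blast
  then obtain N1 where N1': "\<forall>n\<ge>N1. \<forall>x\<in>{0..1}.
            \<bar>LINT u:{0..x}|lborel. phi n u\<bar> \<le> C0 / real n"
    by (auto simp: eventually_sequentially)
  have N1: "\<And>n x. n \<ge> N1 \<Longrightarrow> x \<in> {0..1} \<Longrightarrow>
            \<bar>LINT u:{0..x}|lborel. phi n u\<bar> \<le> C0 / real n" using N1' by blast
  define C where "C = \<bar>C0\<bar>"
  have C0: "C \<ge> 0" by (simp add: C_def)
  from assms(3) obtain D where D: "D > 0"
    "\<forall>\<^sub>F n in sequentially. norm (d n) \<le> D * norm (sqrt (real n) / (ln (real n + 1))\<^sup>2)"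
    by (elim landau_o.bigE)
  then obtain N2 where N2: "\<And>n. n \<ge> N2 \<Longrightarrow> \<bar>d n\<bar> \<le> D * (sqrt (real n) / (ln (real n + 1))\<^sup>2)"
    by (auto simp: eventually_sequentially)
  define N where "N = max 1 (max N1 N2)"
  define M where "M k = (LINT x:{0..1}|lborel. \<bar>phi k x\<bar>)" for k
  define c where "c k = d k * a k * ln (real k)" for k
  define w where "w k = (if k < N then M k else C / real k)" for k
  define b where "b k = \<bar>c k\<bar> * w k" for k
  have w0: "w k \<ge> 0" for k
    using C0 L2nn[of phi k] by (auto simp: w_def M_def)
  have b0: "b k \<ge> 0" for k using w0 by (simp add: b_def)
  have bound: "\<bar>LINT u:{0..x}|lborel. phi k u\<bar> \<le> w k" if "k \<ge> 1" "x \<in> {0..1}" for k x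
  proof (cases "k < N")
    case True thus ?thesis using L2[OF assms(1) that] by (simp add: w_def M_def)
  next
    case False
    hence "k \<ge> N1" by (simp add: N_def)
    hence "\<bar>LINT u:{0..x}|lborel. phi k u\<bar> \<le> C0 / real k" using N1 that(2) by blast
    also have "\<dots> \<le> C / real k" by (simp add: C_def divide_right_mono)
    finally show ?thesis using False by (simp add: w_def)
  qed
  have summ: "summable b"
  proof (rule summable_comparison_test_ev)
    show "summable (\<lambda>k. C * D / 2 * ((a k)\<^sup>2 + 1 / (real k * (ln (real k + 1))\<^sup>2)))"
      by (intro summable_mult summable_add assms(4) L3)
    show "\<forall>\<^sub>F k in sequentially. norm (b k) \<le> C * D / 2 * ((a k)\<^sup>2 + 1 / (real k * (ln (real k + 1))\<^sup>2))"
      unfolding eventually_sequentially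
    proof (intro exI[of _ N] allI impI)
      fix k assume kN: "k \<ge> N"
      have k1: "k \<ge> 1" and kN2: "k \<ge> N2" using kN by (auto simp: N_def)
      define L where "L = ln (real k + 1)"
      define s where "s = sqrt (real k)"
      have L0: "L > 0" using k1 by (simp add: L_def)
      have s0: "s > 0" using k1 by (simp add: s_def)
      have ss: "s * s = real k" by (simp add: s_def)
      have lk: "0 \<le> ln (real k)" "ln (real k) \<le> L" using k1 by (auto simp: L_def)
      have dk: "\<bar>d k\<bar> \<le> D * (s / L\<^sup>2)" using N2[OF kN2] by (simp add: L_def s_def)
      have "\<bar>c k\<bar> = \<bar>d k\<bar> * \<bar>a k\<bar> * ln (real k)" using lk by (simp add: c_def abs_mult)
      also have "\<dots> \<le> D * (s / L\<^sup>2) * \<bar>a k\<bar> * L"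
        using dk lk D(1) s0 L0 by (intro mult_mono) auto
      also have "\<dots> = D * s * \<bar>a k\<bar> / L" using L0 by (simp add: power2_eq_square field_simps)
      finally have ck: "\<bar>c k\<bar> \<le> D * s * \<bar>a k\<bar> / L" .
      have "norm (b k) = \<bar>c k\<bar> * (C / real k)" using kN C0 by (simp add: b_def w_def abs_mult)
      also have "\<dots> \<le> D * s * \<bar>a k\<bar> / L * (C / real k)"
        using ck C0 by (intro mult_right_mono) auto
      also have "\<dots> = C * D * (\<bar>a k\<bar> * (1 / (s * L)))"
        using s0 L0 ss[symmetric] by (simp add: field_simps)
      also have "\<dots> \<le> C * D * (((a k)\<^sup>2 + (1 / (s * L))\<^sup>2) / 2)"
      proof -
        have "0 \<le> (\<bar>a k\<bar> - 1 / (s * L))\<^sup>2" by simp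
        hence "\<bar>a k\<bar> * (1 / (s * L)) \<le> ((a k)\<^sup>2 + (1 / (s * L))\<^sup>2) / 2"
          by (simp add: power2_eq_square algebra_simps abs_mult_self)
        thus ?thesis using C0 D(1) by (intro mult_left_mono) auto
      qed
      also have "\<dots> = C * D / 2 * ((a k)\<^sup>2 + 1 / (real k * (ln (real k + 1))\<^sup>2))"
        using ss[symmetric] by (simp add: L_def power2_eq_square field_simps)
      finally show "norm (b k) \<le> C * D / 2 * ((a k)\<^sup>2 + 1 / (real k * (ln (real k + 1))\<^sup>2))" .
    qed
  qed
  define S where "S = suminf b"
  have Fbound: "\<bar>Fint phi d a n x\<bar> \<le> S" if x: "x \<in> {0..1}" for n x
  proof -
    have "Fint phi d a n x = (\<Sum>k=1..n. LINT u:{0..x}|lborel. c k * phi k u)"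
      unfolding Fint_def c_def
      by (rule sum_integral) (use L1x[OF assms(1) _ x] in auto)
    also have "\<dots> = (\<Sum>k=1..n. c k * (LINT u:{0..x}|lborel. phi k u))" by simp
    finally have "\<bar>Fint phi d a n x\<bar> \<le> (\<Sum>k=1..n. \<bar>c k * (LINT u:{0..x}|lborel. phi k u)\<bar>)"
      by (simp add: sum_abs)
    also have "\<dots> \<le> (\<Sum>k=1..n. b k)"
      unfolding b_def abs_mult by (intro sum_mono mult_left_mono bound) (use x in auto)
    also have "\<dots> \<le> S" unfolding S_def
      by (rule sum_le_suminf[OF summ]) (auto simp: b0)
    finally show ?thesis .
  qed
  have bdd: "bdd_above ((\<lambda>x. \<bar>Fint phi d a n x\<bar>) ` {0..1})" for n
    using Fbound by (intro bdd_aboveI2) auto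
  have supS: "(SUP x\<in>{0..1}. \<bar>Fint phi d a n x\<bar>) \<le> S" for n
    using Fbound by (intro cSUP_least) auto
  have sup0: "0 \<le> (SUP x\<in>{0..1}. \<bar>Fint phi d a n x\<bar>)" for n
    using cSUP_upper[OF _ bdd[of n], of 0] by (auto intro: order_trans[OF abs_ge_zero])
  have part1: "Bn phi d a n \<le> (SUP x\<in>{0..1}. \<bar>Fint phi d a n x\<bar>)" if "n \<ge> 2" for n
    unfolding Bn_def
  proof (rule Max.boundedI)
    have "{\<bar>Fint phi d a n (real i / real n)\<bar> | i. 1 \<le> i \<and> i < n}
       = (\<lambda>i. \<bar>Fint phi d a n (real i / real n)\<bar>) ` {1..<n}" by auto
    thus "finite {\<bar>Fint phi d a n (real i / real n)\<bar> | i. 1 \<le> i \<and> i < n}" by simp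
    show "{\<bar>Fint phi d a n (real i / real n)\<bar> | i. 1 \<le> i \<and> i < n} \<noteq> {}"
      using that by auto
    fix y assume "y \<in> {\<bar>Fint phi d a n (real i / real n)\<bar> | i. 1 \<le> i \<and> i < n}"
    then obtain i where i: "1 \<le> i" "i < n" and y: "y = \<bar>Fint phi d a n (real i / real n)\<bar>" by auto
    have "real i / real n \<in> {0..1}" using i by auto
    thus "y \<le> (SUP x\<in>{0..1}. \<bar>Fint phi d a n x\<bar>)"
      unfolding y by (rule cSUP_upper[OF _ bdd])
  qed
  have part2: "(\<lambda>n. SUP x\<in>{0..1}. \<bar>Fint phi d a n x\<bar>) \<in> O(\<lambda>_. 1)"
  proof (rule landau_o.bigI[of "max S 1"])
    show "max S 1 > 0" by simp
    show "\<forall>\<^sub>F n in sequentially. norm (SUP x\<in>{0..1}. \<bar>Fint phi d a n x\<bar>) \<le> max S 1 * norm (1::real)"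
      using sup0 supS by (auto intro!: always_eventually simp: abs_of_nonneg intro: order_trans[OF _ max.cobounded1])
  qed
  show ?thesis using part1 part2 by blast
qed
end
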